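(* With $Z$, $m$ and $a_0,\dots,a_{m-1}$ as below, let $\alpha=(a_0,\dots,a_{m-1})$. Fix $j\in\mathbb{N}$. Then for all $i\ge m-1$, $$H_Z(i,j)=\sum_{k=1}^{j+1}\#\{h\in\{0,\dots,m-1\} : a_h\ge k\}.$$
   Context: $\mathbf{k}$ algebraically closed, $R=\mathbf{k}[x_0,x_1,y_0,y_1]$ bigraded with $\deg x_i=(1,0)$, $\deg y_i=(0,1)$; a point $[a_0:a_1]\times[b_0:b_1]$ has ideal $(a_1x_0-a_0x_1,b_1y_0-b_0y_1)$; a fat point scheme $\{(P_1;m_1),\dots,(P_s;m_s)\}$ has ideal $\bigcap\wp_{P_i}^{m_i}$ and Hilbert function $H_Z(i,j)=\dim_{\mathbf{k}}(R/I_Z)_{(i,j)}$. Here $Z=\{(R_1\times Q_j;m_{1j}) : j=1,\dots,s\}$ with $R_1\in\mathbb{P}^1$ fixed and $Q_1,\dots,Q_s\in\mathbb{P}^1$ distinct, $m=\max_j m_{1j}$, and $a_h=\sum_{j=1}^s(m_{1j}-h)_+$ for $0\le h\le m-1$, with $(n)_+=\max\{0,n\}$. *)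

theory Defs
  imports "HOL-Library.Poly_Mapping" "HOL-Computational_Algebra.Polynomial"
begin

text \<open>The ring R = k[x0,x1,y0,y1] is the subset of polynomials using only variables 0,1,2,3,
  with x0 = var 0, x1 = var 1, y0 = var 2, y1 = var 3.\<close>

type_synonym 'k mpoly = "(nat \<Rightarrow>\<^sub>0 nat) \<Rightarrow>\<^sub>0 'k"

definition mvar :: "nat \<Rightarrow> 'k::comm_ring_1 mpoly" where
  "mvar v = Poly_Mapping.single (Poly_Mapping.single v 1) 1"

definition mconst :: "'k::comm_ring_1 \<Rightarrow> 'k mpoly" where
  "mconst c = Poly_Mapping.single 0 c"

definition msmult :: "'k::comm_ring_1 \<Rightarrow> 'k mpoly \<Rightarrow> 'k mpoly" where
  "msmult c p = Poly_Mapping.map (\<lambda>x. c * x) p"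

definition Rset :: "'k::comm_ring_1 mpoly set" where
  "Rset = {p. \<forall>mon\<in>Poly_Mapping.keys p. Poly_Mapping.keys mon \<subseteq> {0,1,2,3}}"

definition bihom :: "nat \<Rightarrow> nat \<Rightarrow> 'k::comm_ring_1 mpoly set" where
  "bihom i j = {p. \<forall>mon\<in>Poly_Mapping.keys p. Poly_Mapping.keys mon \<subseteq> {0,1,2,3} \<and>
      Poly_Mapping.lookup mon 0 + Poly_Mapping.lookup mon 1 = i \<and> Poly_Mapping.lookup mon 2 + Poly_Mapping.lookup mon 3 = j}"

definition is_ideal :: "'k::comm_ring_1 mpoly set \<Rightarrow> bool" where
  "is_ideal I \<longleftrightarrow> I \<subseteq> Rset \<and> 0 \<in> I \<and> (\<forall>a\<in>I. \<forall>b\<in>I. a + b \<in> I)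
      \<and> (\<forall>r\<in>Rset. \<forall>a\<in>I. r * a \<in> I)"

definition gen_ideal :: "'k::comm_ring_1 mpoly set \<Rightarrow> 'k mpoly set" where
  "gen_ideal S = \<Inter>{I. is_ideal I \<and> S \<subseteq> I}"

definition ideal_mult :: "'k::comm_ring_1 mpoly set \<Rightarrow> 'k mpoly set \<Rightarrow> 'k mpoly set" where
  "ideal_mult I J = gen_ideal {a * b | a b. a \<in> I \<and> b \<in> J}"

fun ideal_pow :: "'k::comm_ring_1 mpoly set \<Rightarrow> nat \<Rightarrow> 'k mpoly set" where
  "ideal_pow I 0 = Rset"
| "ideal_pow I (Suc n) = ideal_mult I (ideal_pow I n)"

text \<open>Ideal of the point [a0:a1] x [b0:b1] of P1 x P1.\<close>
definition point_ideal :: "('k::comm_ring_1 \<times> 'k) \<Rightarrow> ('k \<times> 'k) \<Rightarrow> 'k mpoly set" where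
  "point_ideal A B = gen_ideal
     {mconst (snd A) * mvar 0 - mconst (fst A) * mvar 1,
      mconst (snd B) * mvar 2 - mconst (fst B) * mvar 3}"

text \<open>Ideal of the fat point scheme {(P_j ; m_j) : j in S}, P_j = A_j x B_j.\<close>
definition fat_ideal :: "(nat \<Rightarrow> ('k::comm_ring_1 \<times> 'k) \<times> ('k \<times> 'k)) \<Rightarrow> (nat \<Rightarrow> nat)
    \<Rightarrow> nat set \<Rightarrow> 'k mpoly set" where
  "fat_ideal P mlt S = Rset \<inter> (\<Inter>j\<in>S. ideal_pow (point_ideal (fst (P j)) (snd (P j))) (mlt j))"

text \<open>Hilbert function H(i,j) = dim_k (R/I)_(i,j) = dim_k R_(i,j) - dim_k I_(i,j).\<close>
definition hilbert_fun :: "'k::field mpoly set \<Rightarrow> nat \<Rightarrow> nat \<Rightarrow> nat" where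
  "hilbert_fun I i j = vector_space.dim (msmult :: 'k \<Rightarrow> 'k mpoly \<Rightarrow> 'k mpoly) (bihom i j)
     - vector_space.dim (msmult :: 'k \<Rightarrow> 'k mpoly \<Rightarrow> 'k mpoly) (bihom i j \<inter> I)"

text \<open>Points of P1 given by homogeneous coordinates; equality in P1 is proportionality.\<close>
definition proj_eq :: "('k::field \<times> 'k) \<Rightarrow> ('k \<times> 'k) \<Rightarrow> bool" where
  "proj_eq P Q \<longleftrightarrow> fst P * snd Q = snd P * fst Q"

end

theory Submission
  imports Defs
begin


lemma msmult_eq: "msmult c p = mconst c * (p::'k::comm_ring_1 mpoly)"
  unfolding msmult_def mconst_def using mult_map_scale_conv_mult[of c p] by (simp add: fun_eq_iff)

lemma mconst_add: "mconst (a + b) = mconst a + (mconst b :: 'k::comm_ring_1 mpoly)"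
  by (simp add: mconst_def single_add)
lemma mconst_mult: "mconst (a * b) = mconst a * (mconst b :: 'k::comm_ring_1 mpoly)"
  by (simp add: mconst_def mult_single)
lemma mconst_1[simp]: "mconst 1 = (1 :: 'k::comm_ring_1 mpoly)"
  by (simp add: mconst_def)
lemma mconst_0[simp]: "mconst 0 = (0 :: 'k::comm_ring_1 mpoly)"
  by (simp add: mconst_def)
lemma mconst_diff: "mconst (a - b) = mconst a - (mconst b :: 'k::comm_ring_1 mpoly)"
  by (simp add: mconst_def single_diff)

interpretation mv: vector_space "msmult :: 'k::field \<Rightarrow> 'k mpoly \<Rightarrow> 'k mpoly"
  by unfold_locales (simp_all add: msmult_eq mconst_add mconst_mult algebra_simps)

lemma keys_plus_nat: "Poly_Mapping.keys (a + b :: nat \<Rightarrow>\<^sub>0 nat) = Poly_Mapping.keys a \<union> Poly_Mapping.keys b"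
  by (auto simp: in_keys_iff lookup_add)

lemma Rset_add: "p \<in> Rset \<Longrightarrow> q \<in> Rset \<Longrightarrow> p + q \<in> Rset"
  unfolding Rset_def using keys_add[of p q] by blast
lemma Rset_mult: "p \<in> Rset \<Longrightarrow> q \<in> Rset \<Longrightarrow> p * q \<in> Rset"
  unfolding Rset_def using keys_mult[of p q] by (fastforce simp: keys_plus_nat)
lemma Rset_0[simp]: "0 \<in> Rset" by (simp add: Rset_def)
lemma Rset_1[simp]: "1 \<in> Rset" by (simp add: Rset_def)
lemma Rset_uminus: "p \<in> Rset \<Longrightarrow> - p \<in> Rset" by (simp add: Rset_def)
lemma Rset_diff: "p \<in> Rset \<Longrightarrow> q \<in> Rset \<Longrightarrow> p - q \<in> Rset"
  using Rset_add[of p "-q"] Rset_uminus[of q] by simp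
lemma Rset_mconst[simp]: "mconst c \<in> Rset" by (simp add: Rset_def mconst_def)

definition bh :: "nat \<Rightarrow> nat \<Rightarrow> (nat \<Rightarrow>\<^sub>0 nat) \<Rightarrow> bool" where
  "bh i j mon \<longleftrightarrow> Poly_Mapping.keys mon \<subseteq> {0,1,2,3} \<and>
      Poly_Mapping.lookup mon 0 + Poly_Mapping.lookup mon 1 = i \<and> Poly_Mapping.lookup mon 2 + Poly_Mapping.lookup mon 3 = j"

lemma bihom_bh: "bihom i j = {p. \<forall>mon\<in>Poly_Mapping.keys p. bh i j mon}"
  by (simp add: bihom_def bh_def)

lemma bh_add: "bh a b m1 \<Longrightarrow> bh c d m2 \<Longrightarrow> bh (a+c) (b+d) (m1 + m2)"
  by (auto simp: bh_def keys_plus_nat lookup_add)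

lemma bihom_mult: "p \<in> bihom a b \<Longrightarrow> q \<in> bihom c d \<Longrightarrow> p * q \<in> bihom (a+c) (b+d)"
  unfolding bihom_bh using keys_mult[of p q] bh_add by fastforce
lemma bihom_add: "p \<in> bihom a b \<Longrightarrow> q \<in> bihom a b \<Longrightarrow> p + q \<in> bihom a b"
  unfolding bihom_bh using keys_add[of p q] by blast
lemma bihom_0[simp]: "0 \<in> bihom a b" by (simp add: bihom_def)
lemma bihom_1[simp]: "1 \<in> bihom 0 0" by (simp add: bihom_def)
lemma bihom_uminus: "p \<in> bihom a b \<Longrightarrow> - p \<in> bihom a b" by (simp add: bihom_def)
lemma bihom_diff: "p \<in> bihom a b \<Longrightarrow> q \<in> bihom a b \<Longrightarrow> p - q \<in> bihom a b"
  using bihom_add[of p a b "-q"] bihom_uminus[of q] by simp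
lemma bihom_mconst[simp]: "mconst c \<in> bihom 0 0" by (simp add: bihom_def mconst_def)
lemma bihom_msmult: "p \<in> bihom a b \<Longrightarrow> msmult c p \<in> bihom a b"
  using bihom_mult[OF bihom_mconst[of c], of p a b] by (simp add: msmult_eq)
lemma bihom_Rset: "bihom a b \<subseteq> Rset" by (auto simp: bihom_def Rset_def)
lemma bihom_power: "p \<in> bihom a b \<Longrightarrow> p ^ n \<in> bihom (n*a) (n*b)"
  by (induction n) (auto dest: bihom_mult)
lemma bihom_prod: "(\<And>x. x \<in> A \<Longrightarrow> f x \<in> bihom 0 (g x)) \<Longrightarrow> prod f A \<in> bihom 0 (sum g A)"
proof (induction A rule: infinite_finite_induct)
  case (insert x F) then show ?case using bihom_mult[of "f x" 0 "g x" "prod f F" 0 "sum g F"] by simp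
qed simp_all
lemma bihom_scaled_var:
  "mconst c * mvar 0 \<in> bihom 1 0" "mconst c * mvar 1 \<in> bihom 1 0"
  "mconst c * mvar 2 \<in> bihom 0 1" "mconst c * mvar 3 \<in> bihom 0 1"
  by (auto simp: bihom_def mconst_def mvar_def mult_single lookup_single)
lemma bihom_var:
  "mvar 0 \<in> bihom 1 0" "mvar 1 \<in> bihom 1 0" "mvar 2 \<in> bihom 0 1" "mvar 3 \<in> bihom 0 1"
  using bihom_scaled_var[of 1] by simp_all

lemma subspace_bihom: "mv.subspace (bihom a b)"
  unfolding mv.subspace_def by (auto intro: bihom_add bihom_msmult)

lemma Rset_var: "v \<le> 3 \<Longrightarrow> mvar v \<in> Rset"
  by (auto simp: Rset_def mvar_def)

lemma is_ideal_Rset: "is_ideal (Rset :: 'k::comm_ring_1 mpoly set)"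
  by (simp add: is_ideal_def Rset_add Rset_mult)

lemma is_ideal_gen: assumes "S \<subseteq> Rset" shows "is_ideal (gen_ideal S)"
proof -
  have R: "Rset \<in> {I. is_ideal I \<and> S \<subseteq> I}" using assms is_ideal_Rset by auto
  have "\<Inter> {I. is_ideal I \<and> S \<subseteq> I} \<subseteq> Rset" using R by blast
  then show ?thesis unfolding gen_ideal_def is_ideal_def by (auto simp: is_ideal_def)
qed

lemma gen_ideal_sub: "S \<subseteq> gen_ideal S"
  by (auto simp: gen_ideal_def)
lemma gen_ideal_least: "is_ideal J \<Longrightarrow> S \<subseteq> J \<Longrightarrow> gen_ideal S \<subseteq> J"
  by (auto simp: gen_ideal_def)

lemma ideal_Rset: "is_ideal J \<Longrightarrow> J \<subseteq> Rset" by (simp add: is_ideal_def)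
lemma ideal_multL: "is_ideal J \<Longrightarrow> a \<in> J \<Longrightarrow> r \<in> Rset \<Longrightarrow> r * a \<in> J"
  by (simp add: is_ideal_def)
lemma ideal_multR: "is_ideal J \<Longrightarrow> a \<in> J \<Longrightarrow> r \<in> Rset \<Longrightarrow> a * r \<in> J"
  using ideal_multL[of J a r] by (simp add: mult.commute)
lemma ideal_add: "is_ideal J \<Longrightarrow> a \<in> J \<Longrightarrow> b \<in> J \<Longrightarrow> a + b \<in> J"
  by (simp add: is_ideal_def)
lemma ideal_0: "is_ideal J \<Longrightarrow> 0 \<in> J"
  by (simp add: is_ideal_def)
lemma ideal_msmult: "is_ideal J \<Longrightarrow> a \<in> J \<Longrightarrow> msmult c a \<in> J"
  by (simp add: msmult_eq ideal_multL)
lemma ideal_subspace: "is_ideal (J :: 'k::field mpoly set) \<Longrightarrow> mv.subspace J"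
  unfolding mv.subspace_def by (auto intro: ideal_add ideal_msmult ideal_0)

lemma ideal_pow_ideal: "is_ideal I \<Longrightarrow> is_ideal (ideal_pow I n)"
proof (induction n)
  case 0 then show ?case by (simp add: is_ideal_Rset)
next
  case (Suc n)
  have "{a * b |a b. a \<in> I \<and> b \<in> ideal_pow I n} \<subseteq> Rset"
    using Suc ideal_Rset[of I] ideal_Rset[of "ideal_pow I n"] by (auto intro!: Rset_mult)
  then show ?case by (simp add: ideal_mult_def is_ideal_gen)
qed

lemma ideal_pow_Suc_mem: "a \<in> I \<Longrightarrow> b \<in> ideal_pow I n \<Longrightarrow> a * b \<in> ideal_pow I (Suc n)"
  using gen_ideal_sub by (fastforce simp: ideal_mult_def)

lemma ideal_pow_Suc_sub: assumes "is_ideal I" shows "ideal_pow I (Suc n) \<subseteq> ideal_pow I n"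
proof -
  have "{a * b |a b. a \<in> I \<and> b \<in> ideal_pow I n} \<subseteq> ideal_pow I n"
    using ideal_pow_ideal[OF assms, of n] ideal_Rset[OF assms] by (auto intro!: ideal_multL)
  then show ?thesis using gen_ideal_least ideal_pow_ideal[OF assms, of n] by (simp add: ideal_mult_def)
qed

lemma ideal_pow_mono: assumes "is_ideal I" "n \<le> m" shows "ideal_pow I m \<subseteq> ideal_pow I n"
  using assms(2)
proof (induction m)
  case (Suc m) then show ?case using ideal_pow_Suc_sub[OF assms(1), of m] by (cases "n = Suc m") auto
qed simp

lemma ideal_pow_sub_T:
  assumes "is_ideal I" "\<And>n. is_ideal (T n)" "Rset \<subseteq> T 0" "I \<subseteq> T (Suc 0)"
    "\<And>a b n. a \<in> T (Suc 0) \<Longrightarrow> b \<in> T n \<Longrightarrow> a * b \<in> T (Suc n)"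
  shows "ideal_pow I n \<subseteq> T n"
proof (induction n)
  case 0 then show ?case using assms by simp
next
  case (Suc n)
  have "{a * b |a b. a \<in> I \<and> b \<in> ideal_pow I n} \<subseteq> T (Suc n)"
    using Suc assms(4,5) by blast
  then show ?case by (simp add: ideal_mult_def gen_ideal_least assms(2))
qed

definition mono_ev :: "(nat \<Rightarrow> 'a::comm_ring_1) \<Rightarrow> (nat \<Rightarrow>\<^sub>0 nat) \<Rightarrow> 'a" where
  "mono_ev \<sigma> mon = (\<Prod>v\<in>Poly_Mapping.keys mon. \<sigma> v ^ Poly_Mapping.lookup mon v)"

definition Ev :: "(nat \<Rightarrow> 'k::comm_ring_1 poly poly) \<Rightarrow> 'k mpoly \<Rightarrow> 'k poly poly" where
  "Ev \<sigma> p = (\<Sum>mon\<in>Poly_Mapping.keys p. [:[:Poly_Mapping.lookup p mon:]:] * mono_ev \<sigma> mon)"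

lemma mono_ev_superset: "finite K \<Longrightarrow> Poly_Mapping.keys mon \<subseteq> K \<Longrightarrow>
   mono_ev \<sigma> mon = (\<Prod>v\<in>K. \<sigma> v ^ Poly_Mapping.lookup mon v)"
  unfolding mono_ev_def by (rule prod.mono_neutral_left) (auto simp: in_keys_iff)

lemma mono_ev_add: "mono_ev \<sigma> (a + b) = mono_ev \<sigma> a * mono_ev \<sigma> b"
proof -
  let ?K = "Poly_Mapping.keys a \<union> Poly_Mapping.keys b"
  have "mono_ev \<sigma> (a + b) = (\<Prod>v\<in>?K. \<sigma> v ^ Poly_Mapping.lookup (a+b) v)"
    by (rule mono_ev_superset) (use keys_add[of a b] in auto)
  also have "\<dots> = (\<Prod>v\<in>?K. \<sigma> v ^ Poly_Mapping.lookup a v) * (\<Prod>v\<in>?K. \<sigma> v ^ Poly_Mapping.lookup b v)"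
    by (simp add: lookup_add power_add prod.distrib)
  also have "\<dots> = mono_ev \<sigma> a * mono_ev \<sigma> b"
    using mono_ev_superset[of ?K a \<sigma>] mono_ev_superset[of ?K b \<sigma>] by simp
  finally show ?thesis .
qed

lemma mono_ev_0[simp]: "mono_ev \<sigma> 0 = 1" by (simp add: mono_ev_def)

lemma Ev_superset: "finite K \<Longrightarrow> Poly_Mapping.keys p \<subseteq> K \<Longrightarrow>
   Ev \<sigma> p = (\<Sum>mon\<in>K. [:[:Poly_Mapping.lookup p mon:]:] * mono_ev \<sigma> mon)"
  unfolding Ev_def by (rule sum.mono_neutral_left) (auto simp: in_keys_iff)

lemma cc_add: "[:[:a + b:]:] = [:[:a:]:] + [:[:b:]:]" by simp

lemma Ev_add: "Ev \<sigma> (p + q) = Ev \<sigma> p + Ev \<sigma> q"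
proof -
  let ?K = "Poly_Mapping.keys p \<union> Poly_Mapping.keys q"
  have "Ev \<sigma> (p + q) = (\<Sum>mon\<in>?K. [:[:Poly_Mapping.lookup (p+q) mon:]:] * mono_ev \<sigma> mon)"
    by (rule Ev_superset) (use keys_add[of p q] in auto)
  also have "\<dots> = (\<Sum>mon\<in>?K. [:[:Poly_Mapping.lookup p mon:]:] * mono_ev \<sigma> mon) + (\<Sum>mon\<in>?K. [:[:Poly_Mapping.lookup q mon:]:] * mono_ev \<sigma> mon)"
    by (simp only: lookup_add cc_add distrib_right sum.distrib)
  also have "\<dots> = Ev \<sigma> p + Ev \<sigma> q"
    using Ev_superset[of ?K p \<sigma>] Ev_superset[of ?K q \<sigma>] by simp
  finally show ?thesis .
qed

lemma Ev_0[simp]: "Ev \<sigma> 0 = 0" by (simp add: Ev_def)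

lemma Ev_single: "Ev \<sigma> (Poly_Mapping.single k c) = [:[:c:]:] * mono_ev \<sigma> k"
  by (simp add: Ev_def)

lemma Ev_sum: "Ev \<sigma> (sum f A) = (\<Sum>x\<in>A. Ev \<sigma> (f x))"
  by (induction A rule: infinite_finite_induct) (simp_all add: Ev_add)

lemma pm_sum_singles: "p = (\<Sum>a\<in>Poly_Mapping.keys p. Poly_Mapping.single a (Poly_Mapping.lookup p a))"
proof (rule poly_mapping_eqI)
  fix k
  show "Poly_Mapping.lookup p k = Poly_Mapping.lookup (\<Sum>a\<in>Poly_Mapping.keys p. Poly_Mapping.single a (Poly_Mapping.lookup p a)) k"
    by (simp add: lookup_sum lookup_single when_def in_keys_iff)
qed

lemma Ev_mult: "Ev \<sigma> (p * q) = Ev \<sigma> p * Ev \<sigma> q"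
proof -
  have "p * q = (\<Sum>a\<in>Poly_Mapping.keys p. Poly_Mapping.single a (Poly_Mapping.lookup p a)) *
     (\<Sum>b\<in>Poly_Mapping.keys q. Poly_Mapping.single b (Poly_Mapping.lookup q b))"
    using pm_sum_singles[of p] pm_sum_singles[of q] by simp
  also have "\<dots> = (\<Sum>a\<in>Poly_Mapping.keys p. \<Sum>b\<in>Poly_Mapping.keys q.
       Poly_Mapping.single (a + b) (Poly_Mapping.lookup p a * Poly_Mapping.lookup q b))"
    by (simp add: sum_distrib_left sum_distrib_right mult_single) (rule sum.swap)
  finally have "Ev \<sigma> (p * q) = (\<Sum>a\<in>Poly_Mapping.keys p. \<Sum>b\<in>Poly_Mapping.keys q.
       [:[:Poly_Mapping.lookup p a:]:] * mono_ev \<sigma> a * ([:[:Poly_Mapping.lookup q b:]:] * mono_ev \<sigma> b))"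
    by (simp add: Ev_sum Ev_single mono_ev_add algebra_simps)
  also have "\<dots> = Ev \<sigma> p * Ev \<sigma> q"
    unfolding Ev_def sum_product by (intro sum.cong refl)
  finally show ?thesis .
qed

lemma Ev_uminus: "Ev \<sigma> (- p) = - Ev \<sigma> p"
  using Ev_add[of \<sigma> "-p" p] by (simp add: eq_neg_iff_add_eq_0)
lemma Ev_diff: "Ev \<sigma> (p - q) = Ev \<sigma> p - Ev \<sigma> q"
  using Ev_add[of \<sigma> p "-q"] Ev_uminus[of \<sigma> q] by simp
lemma Ev_mconst: "Ev \<sigma> (mconst c) = [:[:c:]:]"
  by (simp add: mconst_def Ev_single)
lemma Ev_1[simp]: "Ev \<sigma> 1 = 1"
  using Ev_mconst[of \<sigma> 1] by (simp add: mconst_def one_pCons[symmetric])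
lemma Ev_mvar: "Ev \<sigma> (mvar v) = \<sigma> v"
  by (simp add: mvar_def Ev_single mono_ev_def one_pCons[symmetric])
lemma Ev_msmult: "Ev \<sigma> (msmult c p) = smult [:c:] (Ev \<sigma> p)"
proof -
  have "msmult c p = Poly_Mapping.single 0 c * p"
    unfolding msmult_def using mult_map_scale_conv_mult[of c p] by (simp add: fun_eq_iff)
  then show ?thesis by (simp add: Ev_mult Ev_single)
qed
lemma Ev_power: "Ev \<sigma> (p ^ n) = Ev \<sigma> p ^ n"
  by (induction n) (simp_all add: Ev_mult)
lemma Ev_prod: "Ev \<sigma> (prod f A) = (\<Prod>x\<in>A. Ev \<sigma> (f x))"
  by (induction A rule: infinite_finite_induct) (simp_all add: Ev_mult)



lemma span_mult_left:
  fixes T U :: "'k::field mpoly set"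
  assumes "\<And>y. y \<in> T \<Longrightarrow> x * y \<in> mv.span U" "y \<in> mv.span T"
  shows "x * y \<in> mv.span U"
  using assms(2)
proof (induction rule: mv.span_induct_alt)
  case base then show ?case by (simp add: mv.span_zero)
next
  case (step c y1 y2)
  have "x * (msmult c y1 + y2) = msmult c (x * y1) + x * y2"
    by (simp add: msmult_eq algebra_simps)
  then show ?case using step assms(1) by (simp add: mv.span_add mv.span_scale)
qed

lemma span_mult:
  fixes S T U :: "'k::field mpoly set"
  assumes "\<And>x y. x \<in> S \<Longrightarrow> y \<in> T \<Longrightarrow> x * y \<in> mv.span U" "x \<in> mv.span S" "y \<in> mv.span T"
  shows "x * y \<in> mv.span U"
proof -
  have "\<forall>y\<in>mv.span T. x * y \<in> mv.span U" using assms(2)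
  proof (induction rule: mv.span_induct_alt)
    case base then show ?case by (simp add: mv.span_zero)
  next
    case (step c x1 x2)
    show ?case
    proof
      fix y assume y: "y \<in> mv.span T"
      have "(msmult c x1 + x2) * y = msmult c (x1 * y) + x2 * y"
        by (simp add: msmult_eq algebra_simps)
      moreover have "x1 * y \<in> mv.span U" using span_mult_left[OF _ y] assms(1) step(1) by blast
      ultimately show "(msmult c x1 + x2) * y \<in> mv.span U"
        using step y by (simp add: mv.span_add mv.span_scale)
    qed
  qed
  then show ?thesis using assms(3) by blast
qed

definition Fm :: "'k::comm_ring_1 mpoly \<Rightarrow> 'k mpoly \<Rightarrow> nat \<Rightarrow> 'k mpoly set" where
  "Fm A B n = {A ^ h * B ^ (n - h) | h. h \<le> n}"

lemma forms_step:
  fixes A B :: "'k::field mpoly"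
  assumes "g \<in> mv.span {A, B}" "p \<in> mv.span (Fm A B n)"
  shows "g * p \<in> mv.span (Fm A B (Suc n))"
proof (rule span_mult[OF _ assms])
  fix x y assume x: "x \<in> {A, B}" and y: "y \<in> Fm A B n"
  then obtain h where h: "h \<le> n" "y = A ^ h * B ^ (n - h)" by (auto simp: Fm_def)
  show "x * y \<in> mv.span (Fm A B (Suc n))"
  proof (cases "x = A")
    case True
    then have "x * y = A ^ Suc h * B ^ (Suc n - Suc h)" using h by simp
    moreover have "Suc h \<le> Suc n" using h by simp
    ultimately have "x * y \<in> Fm A B (Suc n)" unfolding Fm_def by blast
    then show ?thesis by (rule mv.span_base)
  next
    case False
    then have "x = B" using x by auto
    then have "x * y = A ^ h * B ^ (Suc n - h)" using h by (simp add: Suc_diff_le mult_ac)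
    moreover have "h \<le> Suc n" using h by simp
    ultimately have "x * y \<in> Fm A B (Suc n)" unfolding Fm_def by blast
    then show ?thesis by (rule mv.span_base)
  qed
qed

lemma forms_pow1:
  fixes A B :: "'k::field mpoly"
  assumes "g \<in> mv.span {A, B}"
  shows "g ^ n \<in> mv.span (Fm A B n)"
proof (induction n)
  case 0
  have "(1::'k mpoly) = A ^ 0 * B ^ (0 - 0)" by simp
  then show ?case by (intro mv.span_base) (auto simp: Fm_def)
next
  case (Suc n) then show ?case using forms_step[OF assms] by simp
qed

lemma forms_pow:
  fixes A B :: "'k::field mpoly"
  assumes "g1 \<in> mv.span {A, B}" "g2 \<in> mv.span {A, B}"
  shows "g1 ^ a * g2 ^ b \<in> mv.span (Fm A B (a + b))"
proof (induction a)
  case 0 then show ?case using forms_pow1[OF assms(2)] by simp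
next
  case (Suc a) then show ?case using forms_step[OF assms(1)] by (simp add: mult.assoc)
qed

lemma indep_family:
  fixes u :: "'i \<Rightarrow> 'k::field mpoly"
  assumes fin: "finite K" and z: "\<And>c. (\<Sum>k\<in>K. msmult (c k) (u k)) = 0 \<Longrightarrow> \<forall>k\<in>K. c k = 0"
  shows "inj_on u K \<and> mv.independent (u ` K)"
proof -
  have inj: "inj_on u K"
  proof (rule inj_onI, rule ccontr)
    fix k1 k2 assume k: "k1 \<in> K" "k2 \<in> K" "u k1 = u k2" "k1 \<noteq> k2"
    define c where "c = (\<lambda>k. if k = k1 then (1::'k) else if k = k2 then -1 else 0)"
    have "(\<Sum>k\<in>K. msmult (c k) (u k)) = (\<Sum>k\<in>{k1,k2}. msmult (c k) (u k))"
      by (rule sum.mono_neutral_right) (use fin k in \<open>auto simp: c_def\<close>)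
    also have "\<dots> = 0" using k by (simp add: c_def mv.scale_minus_left)
    finally have "\<forall>k\<in>K. c k = 0" by (rule z)
    then show False using k by (auto simp: c_def)
  qed
  have "mv.independent (u ` K)"
  proof (rule mv.independent_if_scalars_zero)
    show "finite (u ` K)" using fin by simp
  next
    fix f x assume s: "(\<Sum>x\<in>u ` K. msmult (f x) x) = 0" and x: "x \<in> u ` K"
    have "(\<Sum>k\<in>K. msmult (f (u k)) (u k)) = 0" using s by (simp add: sum.reindex[OF inj])
    then have "\<forall>k\<in>K. f (u k) = 0" by (rule z)
    then show "f x = 0" using x by auto
  qed
  then show ?thesis using inj by simp
qed

lemma span_indexed:
  fixes u :: "'i \<Rightarrow> 'k::field mpoly"
  assumes "finite K" "inj_on u K" "g \<in> mv.span (u ` K)"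
  shows "\<exists>c. g = (\<Sum>k\<in>K. msmult (c k) (u k))"
proof -
  obtain f where "g = (\<Sum>v\<in>u ` K. msmult (f v) v)"
    using assms(3) mv.span_finite[of "u ` K"] assms(1) by auto
  then have "g = (\<Sum>k\<in>K. msmult (f (u k)) (u k))" by (simp add: sum.reindex[OF assms(2)])
  then show ?thesis by (rule exI[of _ "\<lambda>k. f (u k)"])
qed



lemma cpow: "[:p:] ^ n = [:(p::'a::comm_ring_1) ^ n:]"
  by (induction n) (simp_all add: one_pCons)
lemma cprod: "(\<Prod>x\<in>A. [:f x:]) = [:\<Prod>x\<in>A. (f x :: 'a::comm_ring_1):]"
  by (induction A rule: infinite_finite_induct) (simp_all add: one_pCons)
lemma monom_times_const: "monom 1 h * [:q:] = monom (q::'a::comm_ring_1) h"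
  by (simp add: smult_monom)

definition bez :: "'a::comm_ring_1 \<Rightarrow> 'a \<Rightarrow> bool" where
  "bez a b \<longleftrightarrow> (\<exists>u v. u * a + v * b = 1)"

lemma bez_sym: "bez a b \<Longrightarrow> bez b a"
  unfolding bez_def by (metis add.commute)

lemma bez_1: "bez a 1"
  unfolding bez_def by (rule exI[of _ 0], rule exI[of _ 1]) simp

lemma bez_mult_right: assumes "bez a b" "bez a c" shows "bez a (b * c)"
proof -
  obtain u v u' v' where e: "u * a + v * b = 1" "u' * a + v' * c = 1" using assms unfolding bez_def by blast
  have "(u*u'*a + u*v'*c + v*u'*b) * a + (v*v') * (b*c) = (u * a + v * b) * (u' * a + v' * c)"
    by (simp add: algebra_simps)
  also have "\<dots> = 1" using e by simp
  finally show ?thesis unfolding bez_def by blast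
qed

lemma bez_pow_right: "bez a b \<Longrightarrow> bez a (b ^ n)"
  by (induction n) (simp_all add: bez_1 bez_mult_right)

lemma bez_pow: "bez a b \<Longrightarrow> bez (a ^ m) (b ^ n)"
  using bez_pow_right bez_sym by blast

lemma bez_prod_right: "(\<And>j. j \<in> A \<Longrightarrow> bez a (f j)) \<Longrightarrow> bez a (prod f A)"
  by (induction A rule: infinite_finite_induct) (simp_all add: bez_1 bez_mult_right)

lemma bez_dvd: assumes "bez a b" "a dvd q" "b dvd q" shows "a * b dvd q"
proof -
  obtain u v where e: "u * a + v * b = 1" using assms unfolding bez_def by blast
  have "q = u * (a * q) + v * (b * q)" using e by (metis mult.assoc mult_1 distrib_right mult.commute)
  moreover have "a * b dvd a * q" using assms(3) by (simp add: mult_dvd_mono)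
  moreover have "a * b dvd b * q" using assms(2) by (metis mult.commute mult_dvd_mono dvd_refl)
  ultimately show ?thesis by (metis dvd_add dvd_mult)
qed

locale Zs =
  fixes a0 a1 d0 d1 w :: "'k::field" and B0 B1 :: "nat \<Rightarrow> 'k" and mu :: "nat \<Rightarrow> nat" and s i t :: nat
  assumes det: "a1 * d0 - a0 * d1 = 1"
  and Bnz: "\<And>j. j \<in> {1..s} \<Longrightarrow> B1 j - w * B0 j \<noteq> 0"
  and dist: "\<And>j j'. j \<in> {1..s} \<Longrightarrow> j' \<in> {1..s} \<Longrightarrow> j \<noteq> j' \<Longrightarrow> B0 j * B1 j' \<noteq> B1 j * B0 j'"
  and mu_pos: "\<And>j. j \<in> {1..s} \<Longrightarrow> mu j \<ge> 1"
  and s_pos: "s \<ge> 1"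
  and i_ge: "i \<ge> Max (mu ` {1..s}) - 1"
begin

definition sig :: "nat \<Rightarrow> 'k poly poly" where
  "sig v = (if v = 0 then [:[:a0:],[:d0:]:] else if v = 1 then [:[:a1:],[:d1:]:]
     else if v = 2 then [:[:0,1:]:] else [:[:1,w:]:])"

abbreviation E where "E \<equiv> Ev sig"

definition "ell = mconst a1 * mvar 0 - mconst a0 * mvar 1"
definition "ell' = mconst d0 * mvar 1 - mconst d1 * mvar 0"
definition "Y0 = mvar 3 - mconst w * mvar 2"
definition "Y1 = mvar 2"
definition "Lf j = mconst (B1 j) * mvar 2 - mconst (B0 j) * mvar 3"
definition "lam j = [: - B0 j, B1 j - w * B0 j :]"

lemma E_ell: "E ell = monom 1 1"
proof -
  have "E ell = [:[:a1 * a0 - a0 * a1:], [:a1 * d0 - a0 * d1:]:]"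
    by (simp add: ell_def Ev_diff Ev_mult Ev_mconst Ev_mvar sig_def)
  also have "\<dots> = monom 1 1" by (simp add: det monom_Suc monom_0 one_pCons)
  finally show ?thesis .
qed

lemma E_ell': "E ell' = 1"
proof -
  have "E ell' = [:[:d0 * a1 - d1 * a0:], [:d0 * d1 - d1 * d0:]:]"
    by (simp add: ell'_def Ev_diff Ev_mult Ev_mconst Ev_mvar sig_def)
  also have "\<dots> = 1" using det by (simp add: one_pCons algebra_simps)
  finally show ?thesis .
qed

lemma E_Y0: "E Y0 = 1"
  by (simp add: Y0_def Ev_diff Ev_mult Ev_mconst Ev_mvar sig_def one_pCons)

lemma E_Y1: "E Y1 = [:monom 1 1:]"
  by (simp add: Y1_def Ev_mvar sig_def monom_Suc monom_0)

lemma E_Lf: "E (Lf j) = [:lam j:]"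
  by (simp add: Lf_def lam_def Ev_diff Ev_mult Ev_mconst Ev_mvar sig_def algebra_simps)

definition "m = Max (mu ` {1..s})"
definition "ah h = (\<Sum>j=1..s. mu j - h)"
definition "G h = (\<Prod>j\<in>{1..s}. Lf j ^ (mu j - h))"
definition "Gh h = (\<Prod>j\<in>{1..s}. lam j ^ (mu j - h))"
definition "wb h e = ell ^ h * ell' ^ (i - h) * (Y1 ^ e * Y0 ^ (t - e))"
definition "ub h e = ell ^ h * ell' ^ (i - h) * G h * (Y1 ^ e * Y0 ^ (t - ah h - e))"
definition "KW = {..i} \<times> {..t}"
definition "HI = {h. h \<le> i \<and> ah h \<le> t}"
definition "KI = Sigma HI (\<lambda>h. {..t - ah h})"
abbreviation "V \<equiv> (bihom i t :: 'k mpoly set)"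

lemma E_G: "E (G h) = [:Gh h:]"
  by (simp add: G_def Gh_def Ev_prod Ev_power E_Lf cpow cprod)

lemma E_wb: "E (wb h e) = monom (monom 1 e) h"
  by (simp add: wb_def Ev_mult Ev_power E_ell E_ell' E_Y0 E_Y1 cpow monom_power smult_monom)

lemma E_ub: "E (ub h e) = monom (Gh h * monom 1 e) h"
  by (simp add: ub_def Ev_mult Ev_power E_ell E_ell' E_Y0 E_Y1 E_G cpow monom_power smult_monom mult.commute)

lemma E_sum_W: "E (\<Sum>k\<in>KW. msmult (c k) (case_prod wb k)) = (\<Sum>k\<in>KW. monom (monom (c k) (snd k)) (fst k))"
  by (simp add: Ev_sum Ev_msmult split_def E_wb smult_monom)

lemma coeff_E_W: "coeff (coeff (E (\<Sum>k\<in>KW. msmult (c k) (case_prod wb k))) h0) e0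
   = (if (h0, e0) \<in> KW then c (h0, e0) else 0)"
proof -
  have "coeff (coeff (E (\<Sum>k\<in>KW. msmult (c k) (case_prod wb k))) h0) e0
     = (\<Sum>k\<in>KW. if k = (h0, e0) then c k else 0)"
    unfolding E_sum_W coeff_sum by (intro sum.cong refl) (auto simp: prod_eq_iff)
  also have "\<dots> = (if (h0, e0) \<in> KW then c (h0, e0) else 0)"
    by (simp add: KW_def)
  finally show ?thesis .
qed

lemma bihom_mult': "p \<in> bihom a b \<Longrightarrow> q \<in> bihom c d \<Longrightarrow> a + c = x \<Longrightarrow> b + d = y \<Longrightarrow> p * q \<in> bihom x y"
  using bihom_mult by blast

lemma ell_bh: "ell \<in> bihom 1 0" unfolding ell_def by (intro bihom_diff bihom_scaled_var)
lemma ell'_bh: "ell' \<in> bihom 1 0" unfolding ell'_def by (intro bihom_diff bihom_scaled_var)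
lemma Y0_bh: "Y0 \<in> bihom 0 1"
  using bihom_diff[OF bihom_var(4) bihom_scaled_var(3)] by (simp add: Y0_def)
lemma Y1_bh: "Y1 \<in> bihom 0 1" unfolding Y1_def by (rule bihom_var)
lemma Lf_bh: "Lf j \<in> bihom 0 1" unfolding Lf_def by (intro bihom_diff bihom_scaled_var)
lemma G_bh: "G h \<in> bihom 0 (ah h)"
  unfolding G_def ah_def by (rule bihom_prod) (use bihom_power[OF Lf_bh] in simp)

lemma xpart_bh: "h \<le> i \<Longrightarrow> ell ^ h * ell' ^ (i - h) \<in> bihom i 0"
  by (rule bihom_mult'[OF bihom_power[OF ell_bh] bihom_power[OF ell'_bh]]) auto
lemma ypart_bh: "e \<le> n \<Longrightarrow> Y1 ^ e * Y0 ^ (n - e) \<in> bihom 0 n"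
  by (rule bihom_mult'[OF bihom_power[OF Y1_bh] bihom_power[OF Y0_bh]]) auto

lemma wb_V: "(h, e) \<in> KW \<Longrightarrow> wb h e \<in> V"
  unfolding wb_def KW_def by (rule bihom_mult'[OF xpart_bh ypart_bh]) auto

lemma ub_V: "(h, e) \<in> KI \<Longrightarrow> ub h e \<in> V"
proof -
  assume "(h, e) \<in> KI"
  then have h: "h \<le> i" "ah h \<le> t" "e \<le> t - ah h" by (auto simp: KI_def HI_def)
  have "ell ^ h * ell' ^ (i - h) * G h \<in> bihom i (ah h)"
    by (rule bihom_mult'[OF xpart_bh[OF h(1)] G_bh]) auto
  then show ?thesis unfolding ub_def
    by (rule bihom_mult'[OF _ ypart_bh[OF h(3)]]) (use h in auto)
qed

lemma W_indep: "inj_on (case_prod wb) KW \<and> mv.independent (case_prod wb ` KW)"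
proof (rule indep_family)
  show "finite KW" by (simp add: KW_def)
next
  fix c assume z: "(\<Sum>k\<in>KW. msmult (c k) (case_prod wb k)) = 0"
  show "\<forall>k\<in>KW. c k = 0"
  proof
    fix k assume k: "k \<in> KW"
    obtain h0 e0 where k': "k = (h0, e0)" by (cases k)
    show "c k = 0" using coeff_E_W[of c h0 e0] k k' z by simp
  qed
qed

lemma card_KW: "card KW = (i + 1) * (t + 1)"
  by (simp add: KW_def card_cartesian_product)

lemma mvar_pow: "mvar v ^ n = (Poly_Mapping.single (Poly_Mapping.single v n) 1 :: 'k mpoly)"
  by (induction n) (simp_all add: mvar_def mult_single single_add[symmetric])

lemma mon_decomp: "Poly_Mapping.keys (mon :: nat \<Rightarrow>\<^sub>0 nat) \<subseteq> {0,1,2,3} \<Longrightarrow>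
  mon = Poly_Mapping.single 0 (Poly_Mapping.lookup mon 0) + Poly_Mapping.single 1 (Poly_Mapping.lookup mon 1)
     + Poly_Mapping.single 2 (Poly_Mapping.lookup mon 2) + Poly_Mapping.single 3 (Poly_Mapping.lookup mon 3)"
  by (rule poly_mapping_eqI) (auto simp: lookup_add lookup_single when_def in_keys_iff)

lemma single_mon: "Poly_Mapping.keys (mon :: nat \<Rightarrow>\<^sub>0 nat) \<subseteq> {0,1,2,3} \<Longrightarrow>
  (Poly_Mapping.single mon 1 :: 'k mpoly) = (mvar 0 ^ Poly_Mapping.lookup mon 0 * mvar 1 ^ Poly_Mapping.lookup mon 1)
     * (mvar 2 ^ Poly_Mapping.lookup mon 2 * mvar 3 ^ Poly_Mapping.lookup mon 3)"
  apply (subst mon_decomp, assumption)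
  apply (simp add: mvar_pow mult_single add.assoc)
  done

lemma x0_span: "mvar 0 \<in> mv.span {ell, ell'}"
proof -
  have "msmult d0 ell + msmult a0 ell' = mconst (a1 * d0 - a0 * d1) * mvar 0"
    by (simp add: msmult_eq ell_def ell'_def mconst_mult mconst_diff algebra_simps)
  then have "mvar 0 = msmult d0 ell + msmult a0 ell'" by (simp add: det)
  then show ?thesis by (metis insertCI mv.span_add mv.span_base mv.span_scale)
qed

lemma x1_span: "mvar 1 \<in> mv.span {ell, ell'}"
proof -
  have "msmult d1 ell + msmult a1 ell' = mconst (a1 * d0 - a0 * d1) * mvar 1"
    by (simp add: msmult_eq ell_def ell'_def mconst_mult mconst_diff algebra_simps)
  then have "mvar 1 = msmult d1 ell + msmult a1 ell'" by (simp add: det)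
  then show ?thesis by (metis insertCI mv.span_add mv.span_base mv.span_scale)
qed

lemma y0_span: "mvar 2 \<in> mv.span {Y1, Y0}"
  by (simp add: Y1_def mv.span_base)

lemma y1_span: "mvar 3 \<in> mv.span {Y1, Y0}"
proof -
  have "mvar 3 = Y0 + msmult w Y1" by (simp add: Y0_def Y1_def msmult_eq)
  then show ?thesis by (metis insertCI mv.span_add mv.span_base mv.span_scale)
qed

lemma mon_span: assumes "bh i t mon" shows "Poly_Mapping.single mon 1 \<in> mv.span (case_prod wb ` KW)"
proof -
  have k: "Poly_Mapping.keys mon \<subseteq> {0,1,2,3}" and s1: "Poly_Mapping.lookup mon 0 + Poly_Mapping.lookup mon 1 = i"
    and s2: "Poly_Mapping.lookup mon 2 + Poly_Mapping.lookup mon 3 = t" using assms by (auto simp: bh_def)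
  have X: "mvar 0 ^ Poly_Mapping.lookup mon 0 * mvar 1 ^ Poly_Mapping.lookup mon 1 \<in> mv.span (Fm ell ell' i)"
    using forms_pow[OF x0_span x1_span] s1 by metis
  have Y: "mvar 2 ^ Poly_Mapping.lookup mon 2 * mvar 3 ^ Poly_Mapping.lookup mon 3 \<in> mv.span (Fm Y1 Y0 t)"
    using forms_pow[OF y0_span y1_span] s2 by metis
  show ?thesis unfolding single_mon[OF k]
  proof (rule span_mult[OF _ X Y])
    fix x y assume "x \<in> Fm ell ell' i" "y \<in> Fm Y1 Y0 t"
    then obtain h e where "h \<le> i" "e \<le> t" "x = ell ^ h * ell' ^ (i - h)" "y = Y1 ^ e * Y0 ^ (t - e)"
      by (auto simp: Fm_def)
    then have "x * y = case_prod wb (h, e)" "(h, e) \<in> KW" by (simp_all add: wb_def KW_def)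
    then show "x * y \<in> mv.span (case_prod wb ` KW)" by (metis image_eqI mv.span_base)
  qed
qed

lemma V_span: "V \<subseteq> mv.span (case_prod wb ` KW)"
proof
  fix f :: "'k mpoly" assume f: "f \<in> V"
  have "f = (\<Sum>mon\<in>Poly_Mapping.keys f. msmult (Poly_Mapping.lookup f mon) (Poly_Mapping.single mon 1))"
    by (subst pm_sum_singles) (simp add: msmult_def)
  also have "\<dots> \<in> mv.span (case_prod wb ` KW)"
    using f by (intro mv.span_sum mv.span_scale mon_span) (auto simp: bihom_bh)
  finally show "f \<in> mv.span (case_prod wb ` KW)" .
qed

lemma dim_V: "mv.dim V = (i + 1) * (t + 1)"
proof -
  have "card (case_prod wb ` KW) = mv.dim V"
  proof -
    have sub: "case_prod wb ` KW \<subseteq> V" using wb_V by auto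
    show ?thesis using mv.basis_card_eq_dim[OF sub V_span] W_indep by simp
  qed
  moreover have "card (case_prod wb ` KW) = card KW"
    using W_indep card_image by blast
  ultimately show ?thesis using card_KW by simp
qed

definition "Pj j = point_ideal (a0, a1) (B0 j, B1 j)"
definition "Iz = fat_ideal (\<lambda>j. ((a0, a1), (B0 j, B1 j))) mu {1..s}"

lemma Pj_gen: "Pj j = gen_ideal {ell, Lf j}"
  by (simp add: Pj_def point_ideal_def ell_def Lf_def)

lemma ell_R: "ell \<in> Rset" using ell_bh bihom_Rset by blast
lemma Lf_R: "Lf j \<in> Rset" using Lf_bh bihom_Rset by blast

lemma Pj_ideal: "is_ideal (Pj j)"
  unfolding Pj_gen by (rule is_ideal_gen) (use ell_R Lf_R in auto)

lemma Iz_eq: "Iz = Rset \<inter> (\<Inter>j\<in>{1..s}. ideal_pow (Pj j) (mu j))"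
  by (simp add: Iz_def fat_ideal_def Pj_def)

lemma pow_mem: assumes "is_ideal P" "a \<in> P" "b \<in> P" shows "a ^ x * b ^ y \<in> ideal_pow P (x + y)"
proof (induction x)
  case 0
  have "b ^ y \<in> ideal_pow P y"
  proof (induction y)
    case (Suc y) then show ?case using ideal_pow_Suc_mem[OF assms(3)] by simp
  qed simp
  then show ?case by simp
next
  case (Suc x) then show ?case using ideal_pow_Suc_mem[OF assms(2)] by (simp add: mult.assoc)
qed

lemma ub_I: assumes "(h, e) \<in> KI" shows "ub h e \<in> Iz"
proof -
  have uR: "ub h e \<in> Rset" using ub_V[OF assms] bihom_Rset by blast
  have "ub h e \<in> ideal_pow (Pj j) (mu j)" if j: "j \<in> {1..s}" for j
  proof -
    have fin: "finite {1..s}" by simp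
    have G: "G h = Lf j ^ (mu j - h) * (\<Prod>j'\<in>{1..s} - {j}. Lf j' ^ (mu j' - h))"
      unfolding G_def using prod.remove[OF fin j] by simp
    have ub: "ub h e = (ell ^ h * Lf j ^ (mu j - h)) * (ell' ^ (i - h) * (\<Prod>j'\<in>{1..s} - {j}. Lf j' ^ (mu j' - h)) * (Y1 ^ e * Y0 ^ (t - ah h - e)))"
      unfolding ub_def G by (simp add: mult_ac)
    have "ell ^ h * Lf j ^ (mu j - h) \<in> ideal_pow (Pj j) (h + (mu j - h))"
      by (rule pow_mem[OF Pj_ideal]) (simp_all add: Pj_gen gen_ideal_sub[THEN subsetD])
    also have "\<dots> \<subseteq> ideal_pow (Pj j) (mu j)" by (rule ideal_pow_mono[OF Pj_ideal]) simp
    finally have A: "ell ^ h * Lf j ^ (mu j - h) \<in> ideal_pow (Pj j) (mu j)" .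
    have B1: "ell' ^ (i - h) \<in> Rset" using bihom_power[OF ell'_bh] bihom_Rset by blast
    have B2: "(\<Prod>j'\<in>{1..s} - {j}. Lf j' ^ (mu j' - h)) \<in> Rset"
      using bihom_prod[of "{1..s} - {j}" "\<lambda>j'. Lf j' ^ (mu j' - h)" "\<lambda>j'. (mu j' - h) * 1"]
        bihom_power[OF Lf_bh] bihom_Rset by fastforce
    have B3: "Y1 ^ e * Y0 ^ (t - ah h - e) \<in> Rset"
      using bihom_mult[OF bihom_power[OF Y1_bh] bihom_power[OF Y0_bh]] bihom_Rset by blast
    show ?thesis unfolding ub
      by (rule ideal_multR[OF ideal_pow_ideal[OF Pj_ideal] A]) (intro Rset_mult B1 B2 B3)
  qed
  then show ?thesis using uR by (simp add: Iz_eq)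
qed

definition "Sinv l n = {q :: 'k poly poly. \<forall>h<n. l ^ (n - h) dvd coeff q h}"
definition "Tinv l n = {p \<in> Rset. E p \<in> Sinv l n}"

lemma Tinv_ideal: "is_ideal (Tinv l n)"
  unfolding is_ideal_def
proof (intro conjI ballI)
  show "Tinv l n \<subseteq> Rset" by (auto simp: Tinv_def)
  show "0 \<in> Tinv l n" by (simp add: Tinv_def Sinv_def)
next
  fix a b assume "a \<in> Tinv l n" "b \<in> Tinv l n"
  then show "a + b \<in> Tinv l n" by (auto simp: Tinv_def Sinv_def Ev_add Rset_add)
next
  fix r a :: "'k mpoly" assume r: "r \<in> Rset" and a: "a \<in> Tinv l n"
  have "l ^ (n - h) dvd coeff (E r * E a) h" if h: "h < n" for h
    unfolding coeff_mult
  proof (rule dvd_sum)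
    fix x assume x: "x \<in> {..h}"
    have "l ^ (n - (h - x)) dvd coeff (E a) (h - x)" using a h by (auto simp: Tinv_def Sinv_def)
    moreover have "l ^ (n - h) dvd l ^ (n - (h - x))" by (rule le_imp_power_dvd) simp
    ultimately show "l ^ (n - h) dvd coeff (E r) x * coeff (E a) (h - x)"
      by (meson dvd_mult dvd_trans)
  qed
  then show "r * a \<in> Tinv l n" using r a by (auto simp: Tinv_def Sinv_def Ev_mult Rset_mult)
qed

lemma Tinv_mult: assumes a: "a \<in> Tinv l (Suc 0)" and b: "b \<in> Tinv l n" shows "a * b \<in> Tinv l (Suc n)"
proof -
  have a0: "l dvd coeff (E a) 0" using a by (auto simp: Tinv_def Sinv_def)
  have bh: "l ^ (n - h) dvd coeff (E b) h" if "h < n" for h using b that by (auto simp: Tinv_def Sinv_def)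
  have "l ^ (Suc n - h) dvd coeff (E a * E b) h" if h: "h < Suc n" for h
    unfolding coeff_mult
  proof (rule dvd_sum)
    fix x assume x: "x \<in> {..h}"
    show "l ^ (Suc n - h) dvd coeff (E a) x * coeff (E b) (h - x)"
    proof (cases "x = 0")
      case True
      show ?thesis
      proof (cases "h < n")
        case True
        then have "l * l ^ (n - h) dvd coeff (E a) 0 * coeff (E b) h" using a0 bh by (simp add: mult_dvd_mono)
        moreover have "Suc n - h = Suc (n - h)" using True by simp
        ultimately show ?thesis using \<open>x = 0\<close> by simp
      next
        case False
        then have "Suc n - h = 1" using h by simp
        then show ?thesis using a0 \<open>x = 0\<close> by simp
      qed
    next
      case False
      then have "h - x < n" using h x by auto
      then have "l ^ (n - (h - x)) dvd coeff (E b) (h - x)" by (rule bh)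
      moreover have "l ^ (Suc n - h) dvd l ^ (n - (h - x))" using False x by (intro le_imp_power_dvd) auto
      ultimately show ?thesis by (meson dvd_mult dvd_trans)
    qed
  qed
  then show ?thesis using a b by (auto simp: Tinv_def Sinv_def Ev_mult Rset_mult)
qed

lemma Pj_pow_sub: "ideal_pow (Pj j) n \<subseteq> Tinv (lam j) n"
proof (rule ideal_pow_sub_T[OF Pj_ideal])
  show "\<And>n. is_ideal (Tinv (lam j) n)" by (rule Tinv_ideal)
  show "Rset \<subseteq> Tinv (lam j) 0" by (auto simp: Tinv_def Sinv_def)
  show "Pj j \<subseteq> Tinv (lam j) (Suc 0)" unfolding Pj_gen
  proof (rule gen_ideal_least[OF Tinv_ideal])
    show "{ell, Lf j} \<subseteq> Tinv (lam j) (Suc 0)"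
      using ell_R Lf_R by (auto simp: Tinv_def Sinv_def E_ell E_Lf)
  qed
  show "\<And>a b n. a \<in> Tinv (lam j) (Suc 0) \<Longrightarrow> b \<in> Tinv (lam j) n \<Longrightarrow> a * b \<in> Tinv (lam j) (Suc n)"
    by (rule Tinv_mult)
qed

lemma I_dvd: assumes "f \<in> Iz" "j \<in> {1..s}" shows "lam j ^ (mu j - h) dvd coeff (E f) h"
proof (cases "h < mu j")
  case True
  have "f \<in> ideal_pow (Pj j) (mu j)" using assms by (simp add: Iz_eq)
  then have "f \<in> Tinv (lam j) (mu j)" using Pj_pow_sub by blast
  then show ?thesis using True by (simp add: Tinv_def Sinv_def)
qed simp

lemma lam_nz: "j \<in> {1..s} \<Longrightarrow> lam j \<noteq> 0"
  using Bnz[of j] by (simp add: lam_def)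
lemma lam_deg: "j \<in> {1..s} \<Longrightarrow> degree (lam j) = 1"
  using Bnz[of j] by (simp add: lam_def)

lemma lam_coprime: assumes j: "j \<in> {1..s}" "j' \<in> {1..s}" "j \<noteq> j'" shows "bez (lam j) (lam j')"
proof -
  define C where "C = B0 j' * B1 j - B0 j * B1 j'"
  have C: "C \<noteq> 0" using dist[OF j] by (simp add: C_def algebra_simps)
  have "smult (B1 j' - w * B0 j') (lam j) - smult (B1 j - w * B0 j) (lam j') = [:C:]"
    by (simp add: lam_def C_def algebra_simps)
  then have eq: "smult (inverse C) (smult (B1 j' - w * B0 j') (lam j) - smult (B1 j - w * B0 j) (lam j')) = 1"
    using C by (simp add: one_pCons)
  have "[:inverse C * (B1 j' - w * B0 j'):] * lam j + [:- inverse C * (B1 j - w * B0 j):] * lam j' = 1"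
    using eq by (simp add: smult_diff_right)
  then show ?thesis unfolding bez_def by blast
qed

lemma prod_dvd_bez:
  fixes f :: "nat \<Rightarrow> 'k poly"
  assumes "finite A" "\<And>x y. x \<in> A \<Longrightarrow> y \<in> A \<Longrightarrow> x \<noteq> y \<Longrightarrow> bez (f x) (f y)" "\<And>x. x \<in> A \<Longrightarrow> f x dvd q"
  shows "prod f A dvd q"
  using assms
proof (induction A rule: finite_induct)
  case (insert x F)
  have "bez (f x) (prod f F)"
    by (rule bez_prod_right) (use insert in auto)
  moreover have "prod f F dvd q" using insert by auto
  ultimately show ?case using insert by (simp add: bez_dvd)
qed simp

lemma Gh_dvd: assumes "\<And>j. j \<in> {1..s} \<Longrightarrow> lam j ^ (mu j - h) dvd q" shows "Gh h dvd q"
  unfolding Gh_def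
  by (rule prod_dvd_bez) (use assms lam_coprime in \<open>auto intro: bez_pow\<close>)

lemma Gh_nz: "Gh h \<noteq> 0"
  unfolding Gh_def using lam_nz by (simp add: prod_zero_iff)

lemma Gh_deg: "degree (Gh h) = ah h"
  unfolding Gh_def ah_def
  by (subst degree_prod_eq_sum_degree) (use lam_nz lam_deg in \<open>auto simp: degree_power_eq\<close>)

lemma finite_HI: "finite HI" by (rule finite_subset[of _ "{..i}"]) (auto simp: HI_def)
lemma finite_KI: "finite KI" unfolding KI_def using finite_HI by simp

lemma E_sum_U: "E (\<Sum>k\<in>KI. msmult (c k) (case_prod ub k)) = (\<Sum>k\<in>KI. monom (Gh (fst k) * monom (c k) (snd k)) (fst k))"
  by (simp add: Ev_sum Ev_msmult split_def E_ub smult_monom flip: mult_smult_right)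

lemma coeff_E_U: "coeff (E (\<Sum>k\<in>KI. msmult (c k) (case_prod ub k))) h0 =
  (if h0 \<in> HI then Gh h0 * (\<Sum>e\<le>t - ah h0. monom (c (h0, e)) e) else 0)"
proof -
  have "coeff (E (\<Sum>k\<in>KI. msmult (c k) (case_prod ub k))) h0
      = (\<Sum>k\<in>KI. if fst k = h0 then Gh h0 * monom (c k) (snd k) else 0)"
    unfolding E_sum_U coeff_sum by (intro sum.cong refl) auto
  also have "\<dots> = (\<Sum>h\<in>HI. \<Sum>e\<in>{..t - ah h}. if h = h0 then Gh h0 * monom (c (h, e)) e else 0)"
    unfolding KI_def by (subst sum.Sigma) (use finite_HI in \<open>auto intro!: sum.cong simp: split_def\<close>)
  also have "\<dots> = (\<Sum>h\<in>HI. if h = h0 then Gh h0 * (\<Sum>e\<le>t - ah h0. monom (c (h0, e)) e) else 0)"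
    by (intro sum.cong refl) (auto simp: sum_distrib_left)
  also have "\<dots> = (if h0 \<in> HI then Gh h0 * (\<Sum>e\<le>t - ah h0. monom (c (h0, e)) e) else 0)"
    using finite_HI by simp
  finally show ?thesis .
qed

lemma U_indep: "inj_on (case_prod ub) KI \<and> mv.independent (case_prod ub ` KI)"
proof (rule indep_family[OF finite_KI])
  fix c assume z: "(\<Sum>k\<in>KI. msmult (c k) (case_prod ub k)) = 0"
  show "\<forall>k\<in>KI. c k = 0"
  proof
    fix k assume k: "k \<in> KI"
    obtain h0 e0 where k': "k = (h0, e0)" by (cases k)
    have h0: "h0 \<in> HI" "e0 \<le> t - ah h0" using k k' by (auto simp: KI_def)
    have "Gh h0 * (\<Sum>e\<le>t - ah h0. monom (c (h0, e)) e) = 0"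
      using coeff_E_U[of c h0] z h0 by simp
    then have S: "(\<Sum>e\<le>t - ah h0. monom (c (h0, e)) e) = 0" using Gh_nz by simp
    have "coeff (\<Sum>e\<le>t - ah h0. monom (c (h0, e)) e) e0 = c (h0, e0)"
      unfolding coeff_sum using h0 by simp
    then show "c k = 0" using S k' by simp
  qed
qed

lemma U_sub_V: "mv.span (case_prod ub ` KI) \<subseteq> V"
  by (rule mv.span_minimal) (use ub_V subspace_bihom in auto)

lemma V_inj: assumes "g \<in> V" "E g = 0" shows "g = 0"
proof -
  obtain c where c: "g = (\<Sum>k\<in>KW. msmult (c k) (case_prod wb k))"
    using span_indexed[of KW "case_prod wb" g] W_indep V_span assms(1) by (auto simp: KW_def)
  have "\<forall>k\<in>KW. c k = 0"
  proof
    fix k assume k: "k \<in> KW"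
    obtain h0 e0 where k': "k = (h0, e0)" by (cases k)
    show "c k = 0" using coeff_E_W[of c h0 e0] k k' assms(2) c by simp
  qed
  then show ?thesis using c by simp
qed

lemma VI_span: assumes f: "f \<in> V" "f \<in> Iz" shows "f \<in> mv.span (case_prod ub ` KI)"
proof -
  obtain c where c: "f = (\<Sum>k\<in>KW. msmult (c k) (case_prod wb k))"
    using span_indexed[of KW "case_prod wb" f] W_indep V_span f(1) by (auto simp: KW_def)
  define q where "q h = coeff (E f) h" for h
  have cq: "coeff (q h) e = (if (h, e) \<in> KW then c (h, e) else 0)" for h e
    unfolding q_def c by (rule coeff_E_W)
  have degq: "degree (q h) \<le> t" for h
    by (rule degree_le) (auto simp: cq KW_def)
  have qi: "q h = 0" if "h > i" for h
    by (rule poly_eqI) (use that in \<open>auto simp: cq KW_def\<close>)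
  have "Gh h dvd q h" for h
    unfolding q_def by (rule Gh_dvd) (rule I_dvd[OF f(2)])
  then have "\<forall>h. \<exists>r. q h = Gh h * r" by (auto elim: dvdE)
  then obtain r where r: "\<And>h. q h = Gh h * r h" by metis
  have degr: "degree (r h) \<le> t - ah h" and qa: "ah h > t \<Longrightarrow> q h = 0" for h
  proof -
    have "degree (r h) \<le> t - ah h \<and> (ah h > t \<longrightarrow> q h = 0)"
    proof (cases "r h = 0")
      case True then show ?thesis using r[of h] by simp
    next
      case False
      then have "degree (q h) = ah h + degree (r h)"
        using r[of h] Gh_nz[of h] by (simp add: degree_mult_eq Gh_deg)
      then show ?thesis using degq[of h] by simp
    qed
    then show "degree (r h) \<le> t - ah h" "ah h > t \<Longrightarrow> q h = 0" by auto
  qed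
  define f' where "f' = (\<Sum>k\<in>KI. msmult (coeff (r (fst k)) (snd k)) (case_prod ub k))"
  have f'span: "f' \<in> mv.span (case_prod ub ` KI)"
    unfolding f'_def by (intro mv.span_sum mv.span_scale mv.span_base) auto
  have "coeff (E f') h0 = q h0" for h0
  proof -
    have "coeff (E f') h0 = (if h0 \<in> HI then Gh h0 * (\<Sum>e\<le>t - ah h0. monom (coeff (r h0) e) e) else 0)"
      unfolding f'_def using coeff_E_U[of "\<lambda>k. coeff (r (fst k)) (snd k)" h0] by simp
    also have "\<dots> = (if h0 \<in> HI then Gh h0 * r h0 else 0)"
      using poly_as_sum_of_monoms'[OF degr[of h0]] by simp
    also have "\<dots> = q h0"
      using r[of h0] qi[of h0] qa[of h0] by (auto simp: HI_def)
    finally show ?thesis .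
  qed
  then have "E f' = E f" by (intro poly_eqI) (simp add: q_def)
  then have "E (f - f') = 0" by (simp add: Ev_diff)
  moreover have "f - f' \<in> V" using f(1) f'span U_sub_V by (blast intro: bihom_diff)
  ultimately have "f - f' = 0" by (rule V_inj[rotated])
  then show ?thesis using f'span by simp
qed

lemma dim_VI: "mv.dim (V \<inter> Iz) = card KI"
proof -
  have sub: "case_prod ub ` KI \<subseteq> V \<inter> Iz" using ub_V ub_I by auto
  have sp: "V \<inter> Iz \<subseteq> mv.span (case_prod ub ` KI)" using VI_span by blast
  have "card (case_prod ub ` KI) = mv.dim (V \<inter> Iz)"
    using mv.basis_card_eq_dim[OF sub sp] U_indep by simp
  moreover have "card (case_prod ub ` KI) = card KI"
    using U_indep card_image by blast
  ultimately show ?thesis by simp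
qed

lemma card_KI: "card KI = (\<Sum>h\<in>HI. t - ah h + 1)"
  unfolding KI_def using finite_HI by (simp add: card_SigmaI)

lemma ah_zero: "h \<ge> m \<Longrightarrow> ah h = 0"
proof -
  assume h: "h \<ge> m"
  have "mu j \<le> m" if "j \<in> {1..s}" for j unfolding m_def using that by (intro Max_ge) auto
  then show ?thesis using h unfolding ah_def by (intro sum.neutral) fastforce
qed

lemma m_le: "m \<le> i + 1"
proof -
  have "mu 1 \<le> m" unfolding m_def using s_pos by (intro Max_ge) auto
  then have "m \<ge> 1" using mu_pos[of 1] s_pos by simp
  then show ?thesis using i_ge unfolding m_def by simp
qed

lemma sumA: "(\<Sum>k=1..t+1. card {h. h < m \<and> ah h \<ge> k}) = (\<Sum>h<m. min (ah h) (t + 1))"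
proof -
  have "(\<Sum>k=1..t+1. card {h. h < m \<and> ah h \<ge> k}) = (\<Sum>k=1..t+1. \<Sum>h<m. if k \<le> ah h then 1 else 0)"
  proof (intro sum.cong refl)
    fix k
    have "{h. h < m \<and> ah h \<ge> k} = {h \<in> {..<m}. k \<le> ah h}" by auto
    then show "card {h. h < m \<and> ah h \<ge> k} = (\<Sum>h<m. if k \<le> ah h then 1 else 0)"
      by (simp add: sum.inter_filter[symmetric])
  qed
  also have "\<dots> = (\<Sum>h<m. \<Sum>k=1..t+1. if k \<le> ah h then 1 else 0)" by (rule sum.swap)
  also have "\<dots> = (\<Sum>h<m. min (ah h) (t + 1))"
  proof (intro sum.cong refl)
    fix h
    have "(\<Sum>k=1..t+1. if k \<le> ah h then 1 else 0) = (\<Sum>k\<in>{k \<in> {1..t+1}. k \<le> ah h}. 1)"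
      by (rule sum.inter_filter[symmetric]) simp
    also have "\<dots> = card {k \<in> {1..t+1}. k \<le> ah h}" by (simp only: card_eq_sum)
    also have "{k \<in> {1..t+1}. k \<le> ah h} = {1..min (ah h) (t + 1)}" by auto
    finally show "(\<Sum>k=1..t+1. if k \<le> ah h then 1 else 0) = min (ah h) (t + 1)" by simp
  qed
  finally show ?thesis .
qed

lemma sumB: "(\<Sum>h<m. min (ah h) (t + 1)) = (\<Sum>h\<le>i. min (ah h) (t + 1))"
  by (rule sum.mono_neutral_left) (use m_le ah_zero in auto)

lemma sumC: "card KI = (\<Sum>h\<le>i. if ah h \<le> t then t + 1 - ah h else 0)"
proof -
  have "HI = {h \<in> {..i}. ah h \<le> t}" by (auto simp: HI_def)
  then show ?thesis unfolding card_KI by (simp add: sum.inter_filter[symmetric] Suc_diff_le)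
qed

lemma sumD: "(\<Sum>h\<le>i. min (ah h) (t + 1)) + card KI = (i + 1) * (t + 1)"
proof -
  have "(\<Sum>h\<le>i. min (ah h) (t + 1)) + card KI = (\<Sum>h\<le>i. min (ah h) (t + 1) + (if ah h \<le> t then t + 1 - ah h else 0))"
    by (simp add: sumC sum.distrib)
  also have "\<dots> = (\<Sum>h\<le>i. t + 1)" by (intro sum.cong refl) auto
  finally show ?thesis by simp
qed

lemma main: "hilbert_fun Iz i t = (\<Sum>k=1..t+1. card {h. h < m \<and> ah h \<ge> k})"
proof -
  have "hilbert_fun Iz i t = mv.dim V - mv.dim (V \<inter> Iz)" by (simp add: hilbert_fun_def)
  also have "\<dots> = (i + 1) * (t + 1) - card KI" by (simp add: dim_V dim_VI)
  also have "\<dots> = (\<Sum>h\<le>i. min (ah h) (t + 1))" using sumD by simp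
  also have "\<dots> = (\<Sum>k=1..t+1. card {h. h < m \<and> ah h \<ge> k})" by (simp only: sumA sumB)
  finally show ?thesis .
qed

end


lemma alg_closed_infinite: "infinite (UNIV :: 'k::alg_closed_field set)"
proof
  assume fin: "finite (UNIV :: 'k set)"
  define P :: "'k poly" where "P = (\<Prod>a\<in>UNIV. [:-a, 1:])"
  have dP: "degree P = card (UNIV :: 'k set)"
    unfolding P_def by (subst degree_prod_eq_sum_degree) auto
  have "card (UNIV :: 'k set) > 0" using fin by (simp add: card_gt_0_iff)
  then have "degree (P + 1) > 0" using dP by (simp add: degree_add_eq_left)
  then obtain x where "poly (P + 1) x = 0" using alg_closed_imp_poly_has_root by blast
  moreover have "poly P x = 0" unfolding P_def poly_prod using fin
    by (intro prod_zero) auto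
  ultimately show False by simp
qed

theorem corollary2p3:
  fixes R1 :: "'k::alg_closed_field \<times> 'k"
    and Q :: "nat \<Rightarrow> 'k \<times> 'k"
    and mu :: "nat \<Rightarrow> nat"
    and s t i :: nat
  assumes "R1 \<noteq> (0, 0)"
    and "\<forall>j\<in>{1..s}. Q j \<noteq> (0, 0)"
    and "\<forall>j\<in>{1..s}. \<forall>j'\<in>{1..s}. j \<noteq> j' \<longrightarrow> \<not> proj_eq (Q j) (Q j')"
    and "\<forall>j\<in>{1..s}. mu j \<ge> 1"
    and "s \<ge> 1"
    and "i \<ge> Max (mu ` {1..s}) - 1"
  shows "hilbert_fun (fat_ideal (\<lambda>j. (R1, Q j)) mu {1..s}) i t =
    (\<Sum>k = 1..t+1. card {h. h < Max (mu ` {1..s}) \<and>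
        (\<Sum>j = 1..s. mu j - h) \<ge> k})"
proof -
  obtain a0 a1 where R1: "R1 = (a0, a1)" by (cases R1)
  define B0 where "B0 j = fst (Q j)" for j
  define B1 where "B1 j = snd (Q j)" for j
  have Qj: "Q j = (B0 j, B1 j)" for j by (simp add: B0_def B1_def)
  obtain d0 d1 where det: "a1 * d0 - a0 * d1 = 1"
  proof (cases "a1 = 0")
    case True
    then have "a0 \<noteq> 0" using assms(1) R1 by simp
    then show ?thesis using True by (intro that[of 0 "- inverse a0"]) simp
  next
    case False
    then show ?thesis by (intro that[of "inverse a1" 0]) simp
  qed
  define Bad where "Bad = (\<lambda>j. B1 j / B0 j) ` {1..s}"
  have "finite Bad" by (simp add: Bad_def)
  then obtain w where w: "w \<notin> Bad" using ex_new_if_finite[OF alg_closed_infinite] by blast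
  have Bnz: "B1 j - w * B0 j \<noteq> 0" if j: "j \<in> {1..s}" for j
  proof (cases "B0 j = 0")
    case True
    then show ?thesis using assms(2) j Qj[of j] by auto
  next
    case False
    show ?thesis
    proof
      assume "B1 j - w * B0 j = 0"
      then have "w = B1 j / B0 j" using False by (simp add: field_simps)
      then show False using w j by (auto simp: Bad_def)
    qed
  qed
  have dist: "B0 j * B1 j' \<noteq> B1 j * B0 j'" if "j \<in> {1..s}" "j' \<in> {1..s}" "j \<noteq> j'" for j j'
    using assms(3) that by (auto simp: proj_eq_def B0_def B1_def)
  interpret Z: Zs a0 a1 d0 d1 w B0 B1 mu s i t
    by unfold_locales (use det Bnz dist assms(4,5,6) in auto)
  have "fat_ideal (\<lambda>j. (R1, Q j)) mu {1..s} = Z.Iz"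
    by (simp add: Z.Iz_def R1 Qj)
  then show ?thesis using Z.main by (simp add: Z.m_def Z.ah_def)
qed


end
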